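(* Let $\sigma:\mathbb{R}\to\mathbb{R}$ be an increasing odd homeomorphism. Then every point of $\mathbb{R}^2$ that does not belong to a $\sigma$-rational line has a dense orbit in $\mathbb{R}^2$ under the action of the group $\Gamma(\sigma)$.
   Context: For an increasing odd homeomorphism $\sigma:\mathbb{R}\to\mathbb{R}$, define the bijections $h_\sigma,v_\sigma:\mathbb{R}^2\to\mathbb{R}^2$ by $h_\sigma(x,y)=(x+\sigma^{-1}(y),y)$ and $v_\sigma(x,y)=(x,\sigma(x)+y)$, and let $\Gamma(\sigma)$ be the group (under composition) generated by $h_\sigma$ and $v_\sigma$. Let $\mathcal M(h_\sigma,v_\sigma)$ denote the monoid (containing the identity) generated by $h_\sigma,v_\sigma$, and $\mathcal M(h_\sigma^{-1},v_\sigma^{-1})$ the monoid generated by $h_\sigma^{-1},v_\sigma^{-1}$. Let $Ox=\mathbb{R}\times\{0\}$ and $Oy=\{0\}\times\mathbb{R}$. The $\sigma$-rational lines are the subsets of $\mathbb{R}^2$ of the form: $Ox$ or $Oy$; $m(Ox)$ with $m\in\mathcal M(h_\sigma,v_\sigma)$; or $m(Oy)$ with $m\in\mathcal M(h_\sigma^{-1},v_\sigma^{-1})$. *)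

theory Defs
  imports "HOL-Analysis.Analysis"
begin

definition incr_odd_homeo :: "(real \<Rightarrow> real) \<Rightarrow> bool" where
  "incr_odd_homeo \<sigma> \<longleftrightarrow>
     (\<exists>\<tau>. homeomorphism UNIV UNIV \<sigma> \<tau>) \<and> strict_mono \<sigma> \<and> (\<forall>x. \<sigma> (- x) = - \<sigma> x)"

definition h_map :: "(real \<Rightarrow> real) \<Rightarrow> real \<times> real \<Rightarrow> real \<times> real" where
  "h_map \<sigma> = (\<lambda>(x, y). (x + inv \<sigma> y, y))"

definition v_map :: "(real \<Rightarrow> real) \<Rightarrow> real \<times> real \<Rightarrow> real \<times> real" where
  "v_map \<sigma> = (\<lambda>(x, y). (x, \<sigma> x + y))"

inductive_set Gamma :: "(real \<Rightarrow> real) \<Rightarrow> (real \<times> real \<Rightarrow> real \<times> real) set"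
  for \<sigma> where
  Gamma_id: "id \<in> Gamma \<sigma>"
| Gamma_h: "g \<in> Gamma \<sigma> \<Longrightarrow> h_map \<sigma> \<circ> g \<in> Gamma \<sigma>"
| Gamma_v: "g \<in> Gamma \<sigma> \<Longrightarrow> v_map \<sigma> \<circ> g \<in> Gamma \<sigma>"
| Gamma_h_inv: "g \<in> Gamma \<sigma> \<Longrightarrow> inv (h_map \<sigma>) \<circ> g \<in> Gamma \<sigma>"
| Gamma_v_inv: "g \<in> Gamma \<sigma> \<Longrightarrow> inv (v_map \<sigma>) \<circ> g \<in> Gamma \<sigma>"

inductive_set monoid_gen :: "('a \<Rightarrow> 'a) \<Rightarrow> ('a \<Rightarrow> 'a) \<Rightarrow> ('a \<Rightarrow> 'a) set"
  for a b where
  mon_id: "id \<in> monoid_gen a b"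
| mon_a: "m \<in> monoid_gen a b \<Longrightarrow> a \<circ> m \<in> monoid_gen a b"
| mon_b: "m \<in> monoid_gen a b \<Longrightarrow> b \<circ> m \<in> monoid_gen a b"

definition Ox :: "(real \<times> real) set" where "Ox = UNIV \<times> {0}"
definition Oy :: "(real \<times> real) set" where "Oy = {0} \<times> UNIV"

definition rational_lines :: "(real \<Rightarrow> real) \<Rightarrow> (real \<times> real) set set" where
  "rational_lines \<sigma> =
     {Ox, Oy}
     \<union> {m ` Ox | m. m \<in> monoid_gen (h_map \<sigma>) (v_map \<sigma>)}
     \<union> {m ` Oy | m. m \<in> monoid_gen (inv (h_map \<sigma>)) (inv (v_map \<sigma>))}"

definition orbit :: "(real \<Rightarrow> real) \<Rightarrow> real \<times> real \<Rightarrow> (real \<times> real) set" where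
  "orbit \<sigma> p = {g p | g. g \<in> Gamma \<sigma>}"

end

theory Submission
  imports Defs
begin

locale sig =
  fixes \<sigma> \<tau> :: "real \<Rightarrow> real"
  assumes homeo: "homeomorphism UNIV UNIV \<sigma> \<tau>"
    and smono: "strict_mono \<sigma>"
    and sodd: "\<And>x. \<sigma> (- x) = - \<sigma> x"
begin

lemma ts[simp]: "\<tau> (\<sigma> x) = x" and st[simp]: "\<sigma> (\<tau> y) = y"
  using homeo by (auto simp: homeomorphism_def)

lemma cont_s: "continuous_on UNIV \<sigma>" and cont_t: "continuous_on UNIV \<tau>"
  using homeo by (auto simp: homeomorphism_def)

lemma inv_s: "inv \<sigma> = \<tau>"
  by (rule inv_equality) auto

lemma s_less[simp]: "\<sigma> a < \<sigma> b \<longleftrightarrow> a < b"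
  using smono by (metis linorder_neq_iff order_less_asym strict_mono_less)

lemma s_le[simp]: "\<sigma> a \<le> \<sigma> b \<longleftrightarrow> a \<le> b"
  by (meson linorder_not_le s_less)

lemma t_less[simp]: "\<tau> a < \<tau> b \<longleftrightarrow> a < b"
  by (metis s_less st)

lemma t_le[simp]: "\<tau> a \<le> \<tau> b \<longleftrightarrow> a \<le> b"
  by (metis s_le st)

lemma s0[simp]: "\<sigma> 0 = 0"
  using sodd[of 0] by simp

lemma t0[simp]: "\<tau> 0 = 0"
  by (metis s0 ts)

lemma todd: "\<tau> (- y) = - \<tau> y"
  by (metis sodd st ts)

lemma s_pos[simp]: "0 < \<sigma> a \<longleftrightarrow> 0 < a"
  by (metis s0 s_less)
lemma s_neg[simp]: "\<sigma> a < 0 \<longleftrightarrow> a < 0"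
  by (metis s0 s_less)
lemma t_pos[simp]: "0 < \<tau> a \<longleftrightarrow> 0 < a"
  by (metis t0 t_less)
lemma t_neg[simp]: "\<tau> a < 0 \<longleftrightarrow> a < 0"
  by (metis t0 t_less)

lemma s_nonneg[simp]: "0 \<le> \<sigma> a \<longleftrightarrow> 0 \<le> a"
  by (metis s0 s_le)
lemma t_nonneg[simp]: "0 \<le> \<tau> a \<longleftrightarrow> 0 \<le> a"
  by (metis t0 t_le)

lemma h_app: "h_map \<sigma> z = (fst z + \<tau> (snd z), snd z)"
  by (simp add: h_map_def inv_s split: prod.splits)
lemma v_app: "v_map \<sigma> z = (fst z, \<sigma> (fst z) + snd z)"
  by (simp add: v_map_def split: prod.splits)

lemma hi_app: "inv (h_map \<sigma>) z = (fst z - \<tau> (snd z), snd z)"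
proof -
  have "inv (h_map \<sigma>) = (\<lambda>z. (fst z - \<tau> (snd z), snd z))"
    by (rule inv_equality) (auto simp: h_app)
  then show ?thesis by simp
qed

lemma vi_app: "inv (v_map \<sigma>) z = (fst z, snd z - \<sigma> (fst z))"
proof -
  have "inv (v_map \<sigma>) = (\<lambda>z. (fst z, snd z - \<sigma> (fst z)))"
    by (rule inv_equality) (auto simp: v_app)
  then show ?thesis by simp
qed

lemmas maps = h_app v_app hi_app vi_app

lemma cont_h: "continuous_on UNIV (h_map \<sigma>)"
  unfolding h_app by (intro continuous_intros continuous_on_compose2[OF cont_t]) auto
lemma cont_v: "continuous_on UNIV (v_map \<sigma>)"
  unfolding v_app by (intro continuous_intros continuous_on_compose2[OF cont_s]) auto
lemma cont_hi: "continuous_on UNIV (inv (h_map \<sigma>))"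
  unfolding hi_app by (intro continuous_intros continuous_on_compose2[OF cont_t]) auto
lemma cont_vi: "continuous_on UNIV (inv (v_map \<sigma>))"
  unfolding vi_app by (intro continuous_intros continuous_on_compose2[OF cont_s]) auto

end

lemma mon_right: "m \<in> monoid_gen a b \<Longrightarrow> m \<circ> a \<in> monoid_gen a b \<and> m \<circ> b \<in> monoid_gen a b"
proof (induction rule: monoid_gen.induct)
  case mon_id
  then show ?case using monoid_gen.mon_a[OF monoid_gen.mon_id] monoid_gen.mon_b[OF monoid_gen.mon_id] by auto
next
  case (mon_a m)
  then show ?case by (metis comp_assoc monoid_gen.mon_a)
next
  case (mon_b m)
  then show ?case by (metis comp_assoc monoid_gen.mon_b)
qed

lemma mon_neg: assumes "\<And>w. a (- w) = - a w" "\<And>w. b (- w) = - b w"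
  shows "m \<in> monoid_gen a b \<Longrightarrow> m (- w) = - m w"
  by (induction arbitrary: w rule: monoid_gen.induct) (auto simp: assms)

context sig begin

lemma t_less_iff: "\<tau> a < b \<longleftrightarrow> a < \<sigma> b" by (metis s_less st)
lemma less_t_iff: "a < \<tau> b \<longleftrightarrow> \<sigma> a < b" by (metis s_less st)

lemma h_neg: "h_map \<sigma> (- w) = - h_map \<sigma> w" by (simp add: maps todd)
lemma v_neg: "v_map \<sigma> (- w) = - v_map \<sigma> w" by (simp add: maps sodd)
lemma hi_neg: "inv (h_map \<sigma>) (- w) = - inv (h_map \<sigma>) w" by (simp add: maps todd)
lemma vi_neg: "inv (v_map \<sigma>) (- w) = - inv (v_map \<sigma>) w" by (simp add: maps sodd)

lemma Gamma_neg: "g \<in> Gamma \<sigma> \<Longrightarrow> g (- w) = - g w"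
  by (induction arbitrary: w rule: Gamma.induct) (auto simp: h_neg v_neg hi_neg vi_neg)

definition Rf :: "real \<times> real \<Rightarrow> real \<times> real" where "Rf w = (- fst w, snd w)"

lemma Rf_Rf[simp]: "Rf (Rf w) = w" by (simp add: Rf_def)

lemma Gamma_R: "g \<in> Gamma \<sigma> \<Longrightarrow> Rf \<circ> g \<circ> Rf \<in> Gamma \<sigma>"
proof (induction rule: Gamma.induct)
  case Gamma_id
  then show ?case by (simp add: fun_eq_iff Gamma.Gamma_id flip: id_def)
next
  case (Gamma_h g)
  have "Rf \<circ> (h_map \<sigma> \<circ> g) \<circ> Rf = inv (h_map \<sigma>) \<circ> (Rf \<circ> g \<circ> Rf)"
    by (simp add: fun_eq_iff Rf_def maps)
  then show ?case by (simp only:) (rule Gamma.Gamma_h_inv[OF Gamma_h.IH])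
next
  case (Gamma_v g)
  have "Rf \<circ> (v_map \<sigma> \<circ> g) \<circ> Rf = inv (v_map \<sigma>) \<circ> (Rf \<circ> g \<circ> Rf)"
    by (simp add: fun_eq_iff Rf_def sodd maps)
  then show ?case by (simp only:) (rule Gamma.Gamma_v_inv[OF Gamma_v.IH])
next
  case (Gamma_h_inv g)
  have "Rf \<circ> (inv (h_map \<sigma>) \<circ> g) \<circ> Rf = h_map \<sigma> \<circ> (Rf \<circ> g \<circ> Rf)"
    by (simp add: fun_eq_iff Rf_def maps)
  then show ?case by (simp only:) (rule Gamma.Gamma_h[OF Gamma_h_inv.IH])
next
  case (Gamma_v_inv g)
  have "Rf \<circ> (inv (v_map \<sigma>) \<circ> g) \<circ> Rf = v_map \<sigma> \<circ> (Rf \<circ> g \<circ> Rf)"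
    by (simp add: fun_eq_iff Rf_def sodd maps)
  then show ?case by (simp only:) (rule Gamma.Gamma_v[OF Gamma_v_inv.IH])
qed

lemma mon_R: "m \<in> monoid_gen (h_map \<sigma>) (v_map \<sigma>) \<Longrightarrow> Rf \<circ> m \<circ> Rf \<in> monoid_gen (inv (h_map \<sigma>)) (inv (v_map \<sigma>))"
proof (induction rule: monoid_gen.induct)
  case mon_id
  then show ?case by (simp add: fun_eq_iff monoid_gen.mon_id flip: id_def)
next
  case (mon_a m)
  have "Rf \<circ> (h_map \<sigma> \<circ> m) \<circ> Rf = inv (h_map \<sigma>) \<circ> (Rf \<circ> m \<circ> Rf)"
    by (simp add: fun_eq_iff Rf_def maps)
  then show ?case by (simp only:) (rule monoid_gen.mon_a[OF mon_a.IH])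
next
  case (mon_b m)
  have "Rf \<circ> (v_map \<sigma> \<circ> m) \<circ> Rf = inv (v_map \<sigma>) \<circ> (Rf \<circ> m \<circ> Rf)"
    by (simp add: fun_eq_iff Rf_def sodd maps)
  then show ?case by (simp only:) (rule monoid_gen.mon_b[OF mon_b.IH])
qed

definition rstep :: "real \<times> real \<Rightarrow> real \<times> real" where
  "rstep z = (if snd z < \<sigma> (fst z) then inv (h_map \<sigma>) z else inv (v_map \<sigma>) z)"

lemma point_red:
  assumes "0 < fst z" "0 < snd z"
    and hyp: "\<And>M. M \<in> monoid_gen (h_map \<sigma>) (v_map \<sigma>) \<Longrightarrow> z \<notin> (M \<circ> v_map \<sigma>) ` Ox"
  shows "\<exists>G M. G \<in> Gamma \<sigma> \<and> M \<in> monoid_gen (h_map \<sigma>) (v_map \<sigma>) \<and> (\<forall>w. M (G w) = w)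
     \<and> (rstep^^n) z = G z \<and> 0 < fst ((rstep^^n) z) \<and> 0 < snd ((rstep^^n) z)"
proof (induction n)
  case 0
  show ?case
    apply (rule exI[of _ id], rule exI[of _ id])
    using assms Gamma.Gamma_id[of \<sigma>] monoid_gen.mon_id[of "h_map \<sigma>" "v_map \<sigma>"] unfolding id_def by simp
next
  case (Suc n)
  then obtain G M where GM: "G \<in> Gamma \<sigma>" "M \<in> monoid_gen (h_map \<sigma>) (v_map \<sigma>)" "\<forall>w. M (G w) = w"
     "(rstep^^n) z = G z" "0 < fst ((rstep^^n) z)" "0 < snd ((rstep^^n) z)" by blast
  define x where "x = fst (G z)"
  define y where "y = snd (G z)"
  have Gz: "G z = (x, y)" by (simp add: x_def y_def)
  have ne: "\<sigma> x \<noteq> y"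
  proof
    assume e: "\<sigma> x = y"
    have "z = M (G z)" using GM(3) by metis
    also have "\<dots> = (M \<circ> v_map \<sigma>) (x, 0)" using e Gz by (simp add: maps)
    finally have "z \<in> (M \<circ> v_map \<sigma>) ` Ox" by (auto simp: Ox_def)
    with hyp[OF GM(2)] show False by blast
  qed
  have xp: "0 < x" "0 < y" using GM x_def y_def by auto
  show ?case
  proof (cases "y < \<sigma> x")
    case True
    have r: "(rstep^^Suc n) z = (x - \<tau> y, y)"
      using GM(4) True Gz by (simp add: rstep_def maps)
    have inv: "\<forall>w. (M \<circ> h_map \<sigma>) ((inv (h_map \<sigma>) \<circ> G) w) = w"
      using GM(3) by (simp add: maps)
    have hz: "(inv (h_map \<sigma>) \<circ> G) z = (x - \<tau> y, y)" using Gz by (simp add: maps)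
    have pos: "0 < x - \<tau> y" using True by (simp add: t_less_iff)
    show ?thesis
      apply (rule exI[of _ "inv (h_map \<sigma>) \<circ> G"], rule exI[of _ "M \<circ> h_map \<sigma>"])
      apply (intro conjI)
      apply (rule Gamma.Gamma_h_inv[OF GM(1)])
      apply (rule conjunct1[OF mon_right[OF GM(2)]])
      using inv r pos hz xp by simp_all
  next
    case False
    then have F: "\<sigma> x < y" using ne by auto
    have r: "(rstep^^Suc n) z = (x, y - \<sigma> x)"
      using GM(4) False Gz by (simp add: rstep_def maps)
    have inv: "\<forall>w. (M \<circ> v_map \<sigma>) ((inv (v_map \<sigma>) \<circ> G) w) = w"
      using GM(3) by (simp add: maps)
    have hz: "(inv (v_map \<sigma>) \<circ> G) z = (x, y - \<sigma> x)" using Gz by (simp add: maps)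
    show ?thesis
      apply (rule exI[of _ "inv (v_map \<sigma>) \<circ> G"], rule exI[of _ "M \<circ> v_map \<sigma>"])
      apply (intro conjI)
      apply (rule Gamma.Gamma_v_inv[OF GM(1)])
      apply (rule conjunct2[OF mon_right[OF GM(2)]])
      using inv r F hz xp by simp_all
  qed
qed

end

context sig begin

lemma point_ne:
  assumes "0 < fst z" "0 < snd z"
    and hyp: "\<And>M. M \<in> monoid_gen (h_map \<sigma>) (v_map \<sigma>) \<Longrightarrow> z \<notin> (M \<circ> v_map \<sigma>) ` Ox"
  shows "\<sigma> (fst ((rstep^^n) z)) \<noteq> snd ((rstep^^n) z)"
proof
  assume e: "\<sigma> (fst ((rstep^^n) z)) = snd ((rstep^^n) z)"
  obtain G M where GM: "M \<in> monoid_gen (h_map \<sigma>) (v_map \<sigma>)" "\<forall>w. M (G w) = w" "(rstep^^n) z = G z"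
    using point_red[OF assms, of n] by blast
  have "z = M (G z)" using GM(2) by metis
  also have "\<dots> = (M \<circ> v_map \<sigma>) (fst (G z), 0)" using e GM(3)
    by (simp add: maps)
  finally have "z \<in> (M \<circ> v_map \<sigma>) ` Ox" by (auto simp: Ox_def)
  with hyp[OF GM(1)] show False by blast
qed

lemma conv:
  assumes pos: "\<And>n. 0 < fst ((rstep^^n) z) \<and> 0 < snd ((rstep^^n) z)" and ep: "0 < \<epsilon>"
  shows "\<exists>n. fst ((rstep^^n) z) < \<epsilon> \<and> snd ((rstep^^n) z) < \<epsilon>"
proof -
  define x where "x n = fst ((rstep^^n) z)" for n
  define y where "y n = snd ((rstep^^n) z)" for n
  have xp: "0 < x n" "0 < y n" for n using pos[of n] by (auto simp: x_def y_def)
  have stepH: "x (Suc n) = x n - \<tau> (y n) \<and> y (Suc n) = y n" if "y n < \<sigma> (x n)" for n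
    using that by (simp add: x_def y_def rstep_def maps)
  have stepV: "x (Suc n) = x n \<and> y (Suc n) = y n - \<sigma> (x n)" if "\<not> y n < \<sigma> (x n)" for n
    using that by (simp add: x_def y_def rstep_def maps)
  have xdec: "x (Suc n) \<le> x n" for n
    using stepH[of n] stepV[of n] xp[of n] by (cases "y n < \<sigma> (x n)") auto
  have ydec: "y (Suc n) \<le> y n" for n
    using stepH[of n] stepV[of n] xp[of n] by (cases "y n < \<sigma> (x n)") auto
  have xmono: "x n \<le> x m" if "m \<le> n" for m n
    using lift_Suc_antimono_le[of x, OF xdec that] .
  have ymono: "y n \<le> y m" if "m \<le> n" for m n
    using lift_Suc_antimono_le[of y, OF ydec that] .
  have notH: "\<exists>n\<ge>N. \<not> y n < \<sigma> (x n)" for N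
  proof (rule ccontr)
    assume "\<not> ?thesis"
    then have H: "\<And>n. N \<le> n \<Longrightarrow> y n < \<sigma> (x n)" by auto
    have k: "x (N + k) = x N - real k * \<tau> (y N) \<and> y (N + k) = y N" for k
    proof (induction k)
      case 0 then show ?case by simp
    next
      case (Suc k)
      then show ?case using stepH[OF H[of "N + k"]] by (simp add: algebra_simps)
    qed
    obtain k where "x N < real k * \<tau> (y N)"
      using reals_Archimedean3[of "\<tau> (y N)"] xp[of N] by auto
    then show False using k[of k] xp[of "N + k"] by auto
  qed
  have notV: "\<exists>n\<ge>N. y n < \<sigma> (x n)" for N
  proof (rule ccontr)
    assume "\<not> ?thesis"
    then have V: "\<And>n. N \<le> n \<Longrightarrow> \<not> y n < \<sigma> (x n)" by auto
    have k: "y (N + k) = y N - real k * \<sigma> (x N) \<and> x (N + k) = x N" for k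
    proof (induction k)
      case 0 then show ?case by simp
    next
      case (Suc k)
      then show ?case using stepV[OF V[of "N + k"]] by (simp add: algebra_simps)
    qed
    obtain k where "y N < real k * \<sigma> (x N)"
      using reals_Archimedean3[of "\<sigma> (x N)"] xp[of N] by auto
    then show False using k[of k] xp[of "N + k"] by auto
  qed
  have ex_x: "\<exists>n. x n < \<epsilon>"
  proof (rule ccontr)
    assume "\<not> ?thesis"
    then have X: "\<And>n. \<epsilon> \<le> x n" by (auto simp: not_less)
    have "\<exists>n. y n \<le> y 0 - real k * \<sigma> \<epsilon>" for k
    proof (induction k)
      case 0 then show ?case by auto
    next
      case (Suc k)
      then obtain n where n: "y n \<le> y 0 - real k * \<sigma> \<epsilon>" by blast
      obtain m where m: "m \<ge> n" "\<not> y m < \<sigma> (x m)" using notH by blast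
      have "y (Suc m) = y m - \<sigma> (x m)" using stepV[OF m(2)] by simp
      also have "\<dots> \<le> y n - \<sigma> \<epsilon>" using ymono[OF m(1)] s_le[THEN iffD2, OF X[of m]] by linarith
      finally show ?case using n by (intro exI[of _ "Suc m"]) (simp add: algebra_simps)
    qed
    moreover obtain k where "y 0 < real k * \<sigma> \<epsilon>"
      using reals_Archimedean3[of "\<sigma> \<epsilon>"] ep by auto
    ultimately obtain n where "y n < 0" by (smt (verit))
    then show False using xp[of n] by simp
  qed
  have ex_y: "\<exists>n. y n < \<epsilon>"
  proof (rule ccontr)
    assume "\<not> ?thesis"
    then have Y: "\<And>n. \<epsilon> \<le> y n" by (auto simp: not_less)
    have "\<exists>n. x n \<le> x 0 - real k * \<tau> \<epsilon>" for k
    proof (induction k)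
      case 0 then show ?case by auto
    next
      case (Suc k)
      then obtain n where n: "x n \<le> x 0 - real k * \<tau> \<epsilon>" by blast
      obtain m where m: "m \<ge> n" "y m < \<sigma> (x m)" using notV by blast
      have "x (Suc m) = x m - \<tau> (y m)" using stepH[OF m(2)] by simp
      also have "\<dots> \<le> x n - \<tau> \<epsilon>" using xmono[OF m(1)] t_le[THEN iffD2, OF Y[of m]] by linarith
      finally show ?case using n by (intro exI[of _ "Suc m"]) (simp add: algebra_simps)
    qed
    moreover obtain k where "x 0 < real k * \<tau> \<epsilon>"
      using reals_Archimedean3[of "\<tau> \<epsilon>"] ep by auto
    ultimately obtain n where "x n < 0" by (smt (verit))
    then show False using xp[of n] by simp
  qed
  obtain n1 n2 where "x n1 < \<epsilon>" "y n2 < \<epsilon>" using ex_x ex_y by blast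
  then have "x (max n1 n2) < \<epsilon> \<and> y (max n1 n2) < \<epsilon>"
    using xmono[of n1 "max n1 n2"] ymono[of n2 "max n1 n2"] by auto
  then show ?thesis by (auto simp: x_def y_def)
qed

end

context sig begin

lemma seg:
  assumes X: "0 < X - r" and Y: "0 < Y" and r: "0 < r"
  shows "\<exists>s. - r \<le> s \<and> s \<le> r \<and> (\<exists>M\<in>monoid_gen (h_map \<sigma>) (v_map \<sigma>). (X + s, Y) \<in> (M \<circ> v_map \<sigma>) ` Ox)"
proof (rule ccontr)
  assume nh: "\<not> ?thesis"
  define zz where "zz s = (X + s, Y)" for s
  have hyp: "zz s \<notin> (M \<circ> v_map \<sigma>) ` Ox"
    if "- r \<le> s" "s \<le> r" "M \<in> monoid_gen (h_map \<sigma>) (v_map \<sigma>)" for s M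
    using nh that by (auto simp: zz_def)
  have zpos: "0 < fst (zz s)" "0 < snd (zz s)" if "- r \<le> s" for s
    using that X Y by (auto simp: zz_def)
  have ipos: "0 < fst ((rstep^^n) (zz s)) \<and> 0 < snd ((rstep^^n) (zz s))" if "- r \<le> s" "s \<le> r" for s n
    using point_red[OF zpos[OF that(1)] hyp[OF that], of n] by blast
  have ine: "\<sigma> (fst ((rstep^^n) (zz s))) \<noteq> snd ((rstep^^n) (zz s))" if "- r \<le> s" "s \<le> r" for s n
    using point_ne[OF zpos[OF that(1)] hyp[OF that]] by blast
  have inv: "\<exists>G. continuous_on UNIV G \<and> (\<forall>s. - r \<le> s \<and> s \<le> r \<longrightarrow> (rstep^^n) (zz s) = G (zz s))
      \<and> (\<forall>s1 s2. - r \<le> s1 \<longrightarrow> s1 \<le> s2 \<longrightarrow> s2 \<le> r \<longrightarrow>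
          s2 - s1 \<le> fst ((rstep^^n) (zz s2)) - fst ((rstep^^n) (zz s1))
          \<and> snd ((rstep^^n) (zz s2)) \<le> snd ((rstep^^n) (zz s1)))" for n
  proof (induction n)
    case 0
    show ?case
      by (rule exI[of _ id]) (auto simp: zz_def)
  next
    case (Suc n)
    then obtain G where cG: "continuous_on UNIV G"
      and GE: "\<And>s. - r \<le> s \<Longrightarrow> s \<le> r \<Longrightarrow> (rstep^^n) (zz s) = G (zz s)"
      and cur: "\<And>s1 s2. - r \<le> s1 \<Longrightarrow> s1 \<le> s2 \<Longrightarrow> s2 \<le> r \<Longrightarrow>
          s2 - s1 \<le> fst ((rstep^^n) (zz s2)) - fst ((rstep^^n) (zz s1))
          \<and> snd ((rstep^^n) (zz s2)) \<le> snd ((rstep^^n) (zz s1))" by blast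
    define F where "F s = \<sigma> (fst (G (zz s))) - snd (G (zz s))" for s
    have cGz: "continuous_on UNIV (\<lambda>s. G (zz s))"
      by (rule continuous_on_compose2[OF cG]) (auto simp: zz_def intro!: continuous_intros)
    have cF: "continuous_on UNIV F"
      unfolding F_def
      by (intro continuous_intros continuous_on_compose2[OF cont_s] cGz) auto
    have iF: "isCont F s" for s
      using cF continuous_on_eq_continuous_at[OF open_UNIV] by blast
    have Fne: "F s \<noteq> 0" if "- r \<le> s" "s \<le> r" for s
      using ine[OF that, of n] GE[OF that] by (simp add: F_def)
    have sign: "(\<forall>s. - r \<le> s \<and> s \<le> r \<longrightarrow> 0 < F s) \<or> (\<forall>s. - r \<le> s \<and> s \<le> r \<longrightarrow> F s < 0)"
    proof (cases "0 < F (- r)")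
      case True
      have "0 < F s" if "- r \<le> s" "s \<le> r" for s
      proof (rule ccontr)
        assume "\<not> 0 < F s"
        then have "F s \<le> 0" by simp
        from IVT2[of F s 0 "- r", OF this _ that(1)] True iF
        obtain t where "- r \<le> t" "t \<le> s" "F t = 0" by auto
        with Fne[of t] that show False by auto
      qed
      then show ?thesis by blast
    next
      case False
      then have F0: "F (- r) \<le> 0" by simp
      have "F s < 0" if "- r \<le> s" "s \<le> r" for s
      proof (rule ccontr)
        assume "\<not> F s < 0"
        then have "0 \<le> F s" by simp
        from IVT[of F "- r" 0 s, OF F0 this that(1)] iF
        obtain t where "- r \<le> t" "t \<le> s" "F t = 0" by auto
        with Fne[of t] that show False by auto
      qed
      then show ?thesis by blast
    qed
    then show ?case
    proof
      assume P: "\<forall>s. - r \<le> s \<and> s \<le> r \<longrightarrow> 0 < F s"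
      define G' where "G' w = (fst (G w) - \<tau> (snd (G w)), snd (G w))" for w
      have cG': "continuous_on UNIV G'"
        unfolding G'_def
        by (intro continuous_intros continuous_on_compose2[OF cont_t] cG) auto
      have E: "(rstep^^Suc n) (zz s) = G' (zz s)" if "- r \<le> s" "s \<le> r" for s
        using P[rule_format, of s] that GE[OF that] by (simp add: rstep_def maps G'_def F_def)
      show ?thesis
      proof (intro exI[of _ G'] conjI allI impI cG')
        fix s assume "- r \<le> s \<and> s \<le> r"
        then show "(rstep^^Suc n) (zz s) = G' (zz s)" using E by blast
      next
        fix s1 s2 assume a: "- r \<le> s1" "s1 \<le> s2" "s2 \<le> r"
        have c: "s2 - s1 \<le> fst (G (zz s2)) - fst (G (zz s1)) \<and> snd (G (zz s2)) \<le> snd (G (zz s1))"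
          using cur[OF a] GE[of s1] GE[of s2] a by simp
        then show "s2 - s1 \<le> fst ((rstep^^Suc n) (zz s2)) - fst ((rstep^^Suc n) (zz s1))"
        proof -
          have tt: "\<tau> (snd (G (zz s2))) \<le> \<tau> (snd (G (zz s1)))" using c by simp
          have e1: "fst ((rstep^^Suc n) (zz s1)) = fst (G (zz s1)) - \<tau> (snd (G (zz s1)))"
            using E[of s1] a by (simp add: G'_def)
          have e2: "fst ((rstep^^Suc n) (zz s2)) = fst (G (zz s2)) - \<tau> (snd (G (zz s2)))"
            using E[of s2] a by (simp add: G'_def)
          show ?thesis using tt e1 e2 c by linarith
        qed
        show "snd ((rstep^^Suc n) (zz s2)) \<le> snd ((rstep^^Suc n) (zz s1))"
          using E[of s1] E[of s2] a c by (simp add: G'_def)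
      qed
    next
      assume P: "\<forall>s. - r \<le> s \<and> s \<le> r \<longrightarrow> F s < 0"
      define G' where "G' w = (fst (G w), snd (G w) - \<sigma> (fst (G w)))" for w
      have cG': "continuous_on UNIV G'"
        unfolding G'_def
        by (intro continuous_intros continuous_on_compose2[OF cont_s] cG) auto
      have E: "(rstep^^Suc n) (zz s) = G' (zz s)" if "- r \<le> s" "s \<le> r" for s
        using P[rule_format, of s] that GE[OF that] by (simp add: rstep_def maps G'_def F_def)
      show ?thesis
      proof (intro exI[of _ G'] conjI allI impI cG')
        fix s assume "- r \<le> s \<and> s \<le> r"
        then show "(rstep^^Suc n) (zz s) = G' (zz s)" using E by blast
      next
        fix s1 s2 assume a: "- r \<le> s1" "s1 \<le> s2" "s2 \<le> r"
        have c: "s2 - s1 \<le> fst (G (zz s2)) - fst (G (zz s1)) \<and> snd (G (zz s2)) \<le> snd (G (zz s1))"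
          using cur[OF a] GE[of s1] GE[of s2] a by simp
        then show "s2 - s1 \<le> fst ((rstep^^Suc n) (zz s2)) - fst ((rstep^^Suc n) (zz s1))"
          using E[of s1] E[of s2] a by (simp add: G'_def)
        have "fst (G (zz s1)) \<le> fst (G (zz s2))" using c a by linarith
        then show "snd ((rstep^^Suc n) (zz s2)) \<le> snd ((rstep^^Suc n) (zz s1))"
        proof -
          have tt: "\<sigma> (fst (G (zz s1))) \<le> \<sigma> (fst (G (zz s2)))" using \<open>fst (G (zz s1)) \<le> fst (G (zz s2))\<close> by simp
          have e1: "snd ((rstep^^Suc n) (zz s1)) = snd (G (zz s1)) - \<sigma> (fst (G (zz s1)))"
            using E[of s1] a by (simp add: G'_def)
          have e2: "snd ((rstep^^Suc n) (zz s2)) = snd (G (zz s2)) - \<sigma> (fst (G (zz s2)))"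
            using E[of s2] a by (simp add: G'_def)
          show ?thesis using tt e1 e2 c by linarith
        qed
      qed
    qed
  qed
  obtain n where n: "fst ((rstep^^n) (zz r)) < 2 * r"
    using conv[of "zz r" "2 * r"] ipos[of r] r by auto
  obtain G where GG: "\<forall>s1 s2. - r \<le> s1 \<longrightarrow> s1 \<le> s2 \<longrightarrow> s2 \<le> r \<longrightarrow>
          s2 - s1 \<le> fst ((rstep^^n) (zz s2)) - fst ((rstep^^n) (zz s1))"
    using inv[of n] by blast
  then have "2 * r \<le> fst ((rstep^^n) (zz r)) - fst ((rstep^^n) (zz (- r)))"
    using r GG[rule_format, of "- r" r] by simp
  moreover have "0 < fst ((rstep^^n) (zz (- r)))" using ipos[of "- r" n] r by auto
  ultimately show False using n by linarith
qed

end

lemma dist_pair_le: "dist (a, b) (c, d) \<le> \<bar>a - c\<bar> + \<bar>b - d\<bar>"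
  using sqrt_sum_squares_le_sum_abs[of "a - c" "b - d"]
  by (simp add: dist_Pair_Pair dist_real_def power2_abs)

lemma int_approx:
  fixes a t S :: real
  assumes "t \<noteq> 0"
  shows "\<exists>k::int. \<bar>a + of_int k * t - S\<bar> \<le> \<bar>t\<bar>"
proof -
  define c where "c = (S - a) / t"
  define k where "k = \<lfloor>c\<rfloor>"
  have k1: "of_int k \<le> c" "c < of_int k + 1" by (auto simp: k_def)
  have "S - a = c * t" using assms by (simp add: c_def)
  then have "a + of_int k * t - S = (of_int k - c) * t" by (simp add: algebra_simps)
  then have "\<bar>a + of_int k * t - S\<bar> = \<bar>of_int k - c\<bar> * \<bar>t\<bar>" by (simp add: abs_mult)
  also have "\<dots> \<le> 1 * \<bar>t\<bar>" using k1 by (intro mult_right_mono) auto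
  finally show ?thesis by auto
qed

context sig begin

lemma orbit_h: assumes "q \<in> orbit \<sigma> p" shows "h_map \<sigma> q \<in> orbit \<sigma> p"
proof -
  obtain g where g: "g \<in> Gamma \<sigma>" "q = g p" using assms by (auto simp: orbit_def)
  have "h_map \<sigma> q = (h_map \<sigma> \<circ> g) p" using g by simp
  moreover have "h_map \<sigma> \<circ> g \<in> Gamma \<sigma>" by (rule Gamma.Gamma_h[OF g(1)])
  ultimately show ?thesis unfolding orbit_def by blast
qed
lemma orbit_v: assumes "q \<in> orbit \<sigma> p" shows "v_map \<sigma> q \<in> orbit \<sigma> p"
proof -
  obtain g where g: "g \<in> Gamma \<sigma>" "q = g p" using assms by (auto simp: orbit_def)
  have "v_map \<sigma> q = (v_map \<sigma> \<circ> g) p" using g by simp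
  moreover have "v_map \<sigma> \<circ> g \<in> Gamma \<sigma>" by (rule Gamma.Gamma_v[OF g(1)])
  ultimately show ?thesis unfolding orbit_def by blast
qed
lemma orbit_hi: assumes "q \<in> orbit \<sigma> p" shows "inv (h_map \<sigma>) q \<in> orbit \<sigma> p"
proof -
  obtain g where g: "g \<in> Gamma \<sigma>" "q = g p" using assms by (auto simp: orbit_def)
  have "inv (h_map \<sigma>) q = (inv (h_map \<sigma>) \<circ> g) p" using g by simp
  moreover have "inv (h_map \<sigma>) \<circ> g \<in> Gamma \<sigma>" by (rule Gamma.Gamma_h_inv[OF g(1)])
  ultimately show ?thesis unfolding orbit_def by blast
qed
lemma orbit_vi: assumes "q \<in> orbit \<sigma> p" shows "inv (v_map \<sigma>) q \<in> orbit \<sigma> p"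
proof -
  obtain g where g: "g \<in> Gamma \<sigma>" "q = g p" using assms by (auto simp: orbit_def)
  have "inv (v_map \<sigma>) q = (inv (v_map \<sigma>) \<circ> g) p" using g by simp
  moreover have "inv (v_map \<sigma>) \<circ> g \<in> Gamma \<sigma>" by (rule Gamma.Gamma_v_inv[OF g(1)])
  ultimately show ?thesis unfolding orbit_def by blast
qed

lemma closure_inv:
  assumes cf: "continuous_on UNIV f" and o: "\<And>q. q \<in> orbit \<sigma> p \<Longrightarrow> f q \<in> orbit \<sigma> p"
    and z: "z \<in> closure (orbit \<sigma> p)"
  shows "f z \<in> closure (orbit \<sigma> p)"
proof -
  have "f ` closure (orbit \<sigma> p) \<subseteq> closure (orbit \<sigma> p)"
  proof -
    have "f ` orbit \<sigma> p \<subseteq> closure (orbit \<sigma> p)" using o closure_subset by blast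
    then show ?thesis
      by (rule image_closure_subset[OF continuous_on_subset[OF cf subset_UNIV] closed_closure])
  qed
  then show ?thesis using z by blast
qed

lemma C_h: "z \<in> closure (orbit \<sigma> p) \<Longrightarrow> h_map \<sigma> z \<in> closure (orbit \<sigma> p)"
  by (rule closure_inv[OF cont_h orbit_h])
lemma C_v: "z \<in> closure (orbit \<sigma> p) \<Longrightarrow> v_map \<sigma> z \<in> closure (orbit \<sigma> p)"
  by (rule closure_inv[OF cont_v orbit_v])
lemma C_hi: "z \<in> closure (orbit \<sigma> p) \<Longrightarrow> inv (h_map \<sigma>) z \<in> closure (orbit \<sigma> p)"
  by (rule closure_inv[OF cont_hi orbit_hi])
lemma C_vi: "z \<in> closure (orbit \<sigma> p) \<Longrightarrow> inv (v_map \<sigma>) z \<in> closure (orbit \<sigma> p)"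
  by (rule closure_inv[OF cont_vi orbit_vi])

lemma pow_in: assumes "\<And>z. z \<in> S \<Longrightarrow> f z \<in> S" shows "z \<in> S \<Longrightarrow> (f ^^ n) z \<in> S"
  by (induction n) (auto simp: assms)

lemma hpow: "(h_map \<sigma> ^^ n) z = (fst z + real n * \<tau> (snd z), snd z)"
  by (induction n) (auto simp: h_app algebra_simps)
lemma hipow: "(inv (h_map \<sigma>) ^^ n) z = (fst z - real n * \<tau> (snd z), snd z)"
  by (induction n) (auto simp: hi_app algebra_simps)
lemma vpow: "(v_map \<sigma> ^^ n) z = (fst z, snd z + real n * \<sigma> (fst z))"
  by (induction n) (auto simp: v_app algebra_simps)
lemma vipow: "(inv (v_map \<sigma>) ^^ n) z = (fst z, snd z - real n * \<sigma> (fst z))"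
  by (induction n) (auto simp: vi_app algebra_simps)

definition near0 :: "real \<times> real \<Rightarrow> bool" where
  "near0 p \<longleftrightarrow> (\<forall>\<epsilon>>0. \<exists>q\<in>orbit \<sigma> p. fst q \<noteq> 0 \<and> snd q \<noteq> 0 \<and> \<bar>fst q\<bar> < \<epsilon> \<and> \<bar>snd q\<bar> < \<epsilon>)"

lemma t_abs: "\<bar>\<tau> b\<bar> = \<tau> \<bar>b\<bar>"
  by (cases "0 \<le> b") (auto simp: todd abs_if)

lemma Ox_C:
  assumes n0: "near0 p" and zOx: "z \<in> Ox"
  shows "z \<in> closure (orbit \<sigma> p)"
proof -
  obtain S where zS: "z = (S, 0)" using zOx by (auto simp: Ox_def)
  have "\<forall>e>0. \<exists>w\<in>closure (orbit \<sigma> p). dist w z < e"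
  proof (intro allI impI)
    fix e :: real assume e: "0 < e"
    define \<delta> where "\<delta> = min (e / 2) (\<sigma> (e / 2))"
    have \<delta>: "0 < \<delta>" using e by (simp add: \<delta>_def)
    obtain q where q: "q \<in> orbit \<sigma> p" "fst q \<noteq> 0" "snd q \<noteq> 0" "\<bar>fst q\<bar> < \<delta>" "\<bar>snd q\<bar> < \<delta>"
      using n0 \<delta> unfolding near0_def by blast
    define a where "a = fst q"
    define b where "b = snd q"
    define t where "t = \<tau> b"
    have t0: "t \<noteq> 0" using q(3) unfolding t_def b_def by (metis s0 st)
    have "\<bar>b\<bar> < \<sigma> (e / 2)" using q(5) by (simp add: b_def \<delta>_def)
    then have "\<tau> \<bar>b\<bar> < e / 2" by (simp only: t_less_iff)
    then have tsm: "\<bar>t\<bar> < e / 2" by (simp only: t_def t_abs)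
    have bsm: "\<bar>b\<bar> < e / 2" using q(5) by (simp add: b_def \<delta>_def)
    obtain k :: int where k: "\<bar>a + of_int k * t - S\<bar> \<le> \<bar>t\<bar>" using int_approx[OF t0] by blast
    have qC: "q \<in> closure (orbit \<sigma> p)" using q(1) closure_subset by blast
    have wC: "(a + of_int k * t, b) \<in> closure (orbit \<sigma> p)"
    proof (cases "0 \<le> k")
      case True
      have "(h_map \<sigma> ^^ nat k) q \<in> closure (orbit \<sigma> p)" by (rule pow_in[where f="h_map \<sigma>", OF C_h qC])
      moreover have "(h_map \<sigma> ^^ nat k) q = (a + of_int k * t, b)"
        using True by (simp add: hpow a_def b_def t_def)
      ultimately show ?thesis by simp
    next
      case False
      have "(inv (h_map \<sigma>) ^^ nat (- k)) q \<in> closure (orbit \<sigma> p)" by (rule pow_in[where f="inv (h_map \<sigma>)", OF C_hi qC])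
      moreover have "(inv (h_map \<sigma>) ^^ nat (- k)) q = (a + of_int k * t, b)"
        using False by (simp add: hipow a_def b_def t_def)
      ultimately show ?thesis by simp
    qed
    have "dist (a + of_int k * t, b) z \<le> \<bar>a + of_int k * t - S\<bar> + \<bar>b - 0\<bar>"
      unfolding zS by (rule dist_pair_le)
    also have "\<dots> < e" using k tsm bsm by simp
    finally show "\<exists>w\<in>closure (orbit \<sigma> p). dist w z < e" using wC by blast
  qed
  then show ?thesis using closed_approachable[of "closure (orbit \<sigma> p)" z] by simp
qed

lemma mon_C: "M \<in> monoid_gen (h_map \<sigma>) (v_map \<sigma>) \<Longrightarrow> z \<in> closure (orbit \<sigma> p) \<Longrightarrow> M z \<in> closure (orbit \<sigma> p)"
  by (induction arbitrary: z rule: monoid_gen.induct) (auto intro: C_h C_v)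

lemma Q_C:
  assumes n0: "near0 p" and z: "0 < fst z" "0 < snd z"
  shows "z \<in> closure (orbit \<sigma> p)"
proof -
  obtain X Y where zXY: "z = (X, Y)" by (cases z)
  have "\<forall>e>0. \<exists>w\<in>closure (orbit \<sigma> p). dist w z < e"
  proof (intro allI impI)
    fix e :: real assume e: "0 < e"
    define r where "r = min (e / 2) (X / 2)"
    have r: "0 < r" "0 < X - r" "r < e" using e z zXY by (auto simp: r_def)
    obtain s M where sM: "- r \<le> s" "s \<le> r" "M \<in> monoid_gen (h_map \<sigma>) (v_map \<sigma>)"
      "(X + s, Y) \<in> (M \<circ> v_map \<sigma>) ` Ox"
    proof -
      have Y: "0 < Y" using z zXY by simp
      show ?thesis using seg[OF r(2) Y r(1)] that by blast
    qed
    then obtain u where u: "u \<in> Ox" "(X + s, Y) = M (v_map \<sigma> u)" by auto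
    have "v_map \<sigma> u \<in> closure (orbit \<sigma> p)" by (rule C_v[OF Ox_C[OF n0 u(1)]])
    then have wC: "(X + s, Y) \<in> closure (orbit \<sigma> p)" using mon_C[OF sM(3)] u(2) by simp
    have "dist (X + s, Y) z = \<bar>s\<bar>" by (simp add: zXY dist_Pair_Pair dist_real_def)
    also have "\<dots> < e" using sM r by simp
    finally show "\<exists>w\<in>closure (orbit \<sigma> p). dist w z < e" using wC by blast
  qed
  then show ?thesis using closed_approachable[of "closure (orbit \<sigma> p)" z] by simp
qed

lemma all_C:
  assumes n0: "near0 p"
  shows "closure (orbit \<sigma> p) = UNIV"
proof -
  have "z \<in> closure (orbit \<sigma> p)" for z
  proof -
    obtain x y where zxy: "z = (x, y)" by (cases z)
    consider "y = 0" | "0 < y" | "y < 0" by linarith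
    then show ?thesis
    proof cases
      case 1
      then show ?thesis using Ox_C[OF n0] zxy by (auto simp: Ox_def)
    next
      case 2
      obtain n where n: "- x < real n * \<tau> y" using reals_Archimedean3[of "\<tau> y"] 2 by auto
      have "(h_map \<sigma> ^^ n) z \<in> closure (orbit \<sigma> p)"
        by (rule Q_C[OF n0]) (use n 2 zxy in \<open>auto simp: hpow\<close>)
      then have "(inv (h_map \<sigma>) ^^ n) ((h_map \<sigma> ^^ n) z) \<in> closure (orbit \<sigma> p)"
        using pow_in[where f="inv (h_map \<sigma>)", OF C_hi] by blast
      then show ?thesis by (simp add: hpow hipow)
    next
      case 3
      have ty: "0 < - \<tau> y" using 3 by simp
      obtain n where n: "- x < real n * (- \<tau> y)" using reals_Archimedean3[OF ty, rule_format, of "- x"] by blast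
      define x1 where "x1 = x - real n * \<tau> y"
      have x1: "0 < x1" using n by (simp add: x1_def)
      obtain m where m: "- y < real m * \<sigma> x1" using reals_Archimedean3[of "\<sigma> x1"] x1 by auto
      have "(v_map \<sigma> ^^ m) ((inv (h_map \<sigma>) ^^ n) z) \<in> closure (orbit \<sigma> p)"
        by (rule Q_C[OF n0]) (use m x1 zxy in \<open>auto simp: vpow hipow x1_def\<close>)
      then have "(h_map \<sigma> ^^ n) ((inv (v_map \<sigma>) ^^ m) ((v_map \<sigma> ^^ m) ((inv (h_map \<sigma>) ^^ n) z)))
          \<in> closure (orbit \<sigma> p)"
        by (intro pow_in[where f="h_map \<sigma>", OF C_h] pow_in[where f="inv (v_map \<sigma>)", OF C_vi])
      then show ?thesis by (simp add: hpow hipow vpow vipow)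
    qed
  qed
  then show ?thesis by auto
qed

end

context sig begin

definition hypQ :: "real \<times> real \<Rightarrow> bool" where
  "hypQ z \<longleftrightarrow> (\<forall>M. M \<in> monoid_gen (h_map \<sigma>) (v_map \<sigma>) \<longrightarrow> z \<notin> (M \<circ> v_map \<sigma>) ` Ox)"

lemma RL_Ox: "m \<in> monoid_gen (h_map \<sigma>) (v_map \<sigma>) \<Longrightarrow> m ` Ox \<in> rational_lines \<sigma>"
  unfolding rational_lines_def by (rule UnI1, rule UnI2) blast
lemma RL_Oy: "m \<in> monoid_gen (inv (h_map \<sigma>)) (inv (v_map \<sigma>)) \<Longrightarrow> m ` Oy \<in> rational_lines \<sigma>"
  unfolding rational_lines_def by (rule UnI2) blast

lemma near0_Q:
  assumes "0 < fst p" "0 < snd p" "hypQ p"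
  shows "near0 p"
  unfolding near0_def
proof (intro allI impI)
  fix e :: real assume e: "0 < e"
  have hyp: "\<And>M. M \<in> monoid_gen (h_map \<sigma>) (v_map \<sigma>) \<Longrightarrow> p \<notin> (M \<circ> v_map \<sigma>) ` Ox"
    using assms(3) by (auto simp: hypQ_def)
  have pos: "0 < fst ((rstep^^n) p) \<and> 0 < snd ((rstep^^n) p)" for n
    using point_red[OF assms(1,2) hyp, of n] by blast
  obtain n where n: "fst ((rstep^^n) p) < e" "snd ((rstep^^n) p) < e"
    using conv[OF pos e] by blast
  obtain G where G: "G \<in> Gamma \<sigma>" "(rstep^^n) p = G p"
    using point_red[OF assms(1,2) hyp, of n] by blast
  have "(rstep^^n) p \<in> orbit \<sigma> p" using G unfolding orbit_def by blast
  then show "\<exists>q\<in>orbit \<sigma> p. fst q \<noteq> 0 \<and> snd q \<noteq> 0 \<and> \<bar>fst q\<bar> < e \<and> \<bar>snd q\<bar> < e"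
    using pos[of n] n by (intro bexI[of _ "(rstep^^n) p"]) auto
qed

lemma near0_neg:
  assumes "near0 (- p)" shows "near0 p"
  unfolding near0_def
proof (intro allI impI)
  fix e :: real assume e: "0 < e"
  obtain q where q: "q \<in> orbit \<sigma> (- p)" "fst q \<noteq> 0" "snd q \<noteq> 0" "\<bar>fst q\<bar> < e" "\<bar>snd q\<bar> < e"
    using assms e unfolding near0_def by blast
  obtain g where g: "g \<in> Gamma \<sigma>" "q = g (- p)" using q(1) unfolding orbit_def by blast
  have "- q = g p" using Gamma_neg[OF g(1), of p] g(2) by simp
  then have "- q \<in> orbit \<sigma> p" using g(1) unfolding orbit_def by blast
  then show "\<exists>q\<in>orbit \<sigma> p. fst q \<noteq> 0 \<and> snd q \<noteq> 0 \<and> \<bar>fst q\<bar> < e \<and> \<bar>snd q\<bar> < e"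
    using q by (intro bexI[of _ "- q"]) auto
qed

lemma near0_R:
  assumes "near0 (Rf p)" shows "near0 p"
  unfolding near0_def
proof (intro allI impI)
  fix e :: real assume e: "0 < e"
  obtain q where q: "q \<in> orbit \<sigma> (Rf p)" "fst q \<noteq> 0" "snd q \<noteq> 0" "\<bar>fst q\<bar> < e" "\<bar>snd q\<bar> < e"
    using assms e unfolding near0_def by blast
  obtain g where g: "g \<in> Gamma \<sigma>" "q = g (Rf p)" using q(1) unfolding orbit_def by blast
  have "Rf q = (Rf \<circ> g \<circ> Rf) p" using g(2) by simp
  then have "Rf q \<in> orbit \<sigma> p" using Gamma_R[OF g(1)] unfolding orbit_def by blast
  then show "\<exists>q\<in>orbit \<sigma> p. fst q \<noteq> 0 \<and> snd q \<noteq> 0 \<and> \<bar>fst q\<bar> < e \<and> \<bar>snd q\<bar> < e"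
    using q by (intro bexI[of _ "Rf q"]) (auto simp: Rf_def)
qed

lemma RL_neg:
  assumes "\<forall>L\<in>rational_lines \<sigma>. p \<notin> L"
  shows "\<forall>L\<in>rational_lines \<sigma>. - p \<notin> L"
proof (intro ballI notI)
  fix L assume L: "L \<in> rational_lines \<sigma>" and mp: "- p \<in> L"
  have "p \<in> L"
    using L unfolding rational_lines_def
  proof (elim UnE insertE CollectE exE conjE)
    assume "L = Ox" then show ?thesis using mp by (cases p) (auto simp: Ox_def)
  next
    assume "L = Oy" then show ?thesis using mp by (cases p) (auto simp: Oy_def)
  next
    assume "L \<in> {}" then show ?thesis by simp
  next
    fix m assume Lm: "L = m ` Ox" and m: "m \<in> monoid_gen (h_map \<sigma>) (v_map \<sigma>)"
    obtain w where w: "w \<in> Ox" "- p = m w" using mp Lm by auto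
    have "p = m (- w)" using mon_neg[OF h_neg v_neg m, of w] w(2) by (metis minus_minus)
    moreover have "- w \<in> Ox" using w(1) by (auto simp: Ox_def)
    ultimately show ?thesis using Lm by auto
  next
    fix m assume Lm: "L = m ` Oy" and m: "m \<in> monoid_gen (inv (h_map \<sigma>)) (inv (v_map \<sigma>))"
    obtain w where w: "w \<in> Oy" "- p = m w" using mp Lm by auto
    have "p = m (- w)" using mon_neg[OF hi_neg vi_neg m, of w] w(2) by (metis minus_minus)
    moreover have "- w \<in> Oy" using w(1) by (auto simp: Oy_def)
    ultimately show ?thesis using Lm by auto
  qed
  with assms L show False by blast
qed

lemma hypQ_of:
  assumes "\<forall>L\<in>rational_lines \<sigma>. p \<notin> L" shows "hypQ p"
  unfolding hypQ_def
proof (intro allI impI)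
  fix M assume M: "M \<in> monoid_gen (h_map \<sigma>) (v_map \<sigma>)"
  have "(M \<circ> v_map \<sigma>) ` Ox \<in> rational_lines \<sigma>"
    by (rule RL_Ox[OF conjunct2[OF mon_right[OF M]]])
  then show "p \<notin> (M \<circ> v_map \<sigma>) ` Ox" using assms by blast
qed

lemma hypQ_R:
  assumes "\<forall>L\<in>rational_lines \<sigma>. p \<notin> L" shows "hypQ (Rf p)"
  unfolding hypQ_def
proof (intro allI impI notI)
  fix M assume M: "M \<in> monoid_gen (h_map \<sigma>) (v_map \<sigma>)" and Rp: "Rf p \<in> (M \<circ> v_map \<sigma>) ` Ox"
  obtain t where t: "Rf p = M (v_map \<sigma> (t, 0))" using Rp by (auto simp: Ox_def)
  have "p = Rf (M (v_map \<sigma> (t, 0)))" using t by (metis Rf_Rf)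
  also have "\<dots> = (Rf \<circ> M \<circ> Rf) (Rf (v_map \<sigma> (t, 0)))" by simp
  also have "Rf (v_map \<sigma> (t, 0)) = inv (h_map \<sigma>) (0, \<sigma> t)" by (simp add: Rf_def maps)
  finally have pe: "p = ((Rf \<circ> M \<circ> Rf) \<circ> inv (h_map \<sigma>)) (0, \<sigma> t)" by (simp only: comp_apply)
  have "(0, \<sigma> t) \<in> Oy" by (simp add: Oy_def)
  then have "p \<in> ((Rf \<circ> M \<circ> Rf) \<circ> inv (h_map \<sigma>)) ` Oy" using pe by (rule rev_image_eqI)
  moreover have "((Rf \<circ> M \<circ> Rf) \<circ> inv (h_map \<sigma>)) ` Oy \<in> rational_lines \<sigma>"
    by (rule RL_Oy[OF conjunct1[OF mon_right[OF mon_R[OF M]]]])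
  ultimately show False using assms by blast
qed

lemma near0_II:
  assumes "\<forall>L\<in>rational_lines \<sigma>. p \<notin> L" "fst p < 0" "0 < snd p"
  shows "near0 p"
proof -
  have "near0 (Rf p)"
    by (rule near0_Q) (use assms hypQ_R[OF assms(1)] in \<open>auto simp: Rf_def\<close>)
  then show ?thesis by (rule near0_R)
qed

lemma main:
  assumes nrl: "\<forall>L\<in>rational_lines \<sigma>. p \<notin> L"
  shows "closure (orbit \<sigma> p) = UNIV"
proof -
  have "Ox \<in> rational_lines \<sigma>" "Oy \<in> rational_lines \<sigma>" by (auto simp: rational_lines_def)
  then have "p \<notin> Ox" "p \<notin> Oy" using nrl by auto
  then have nz: "fst p \<noteq> 0" "snd p \<noteq> 0"
    by (metis Oy_def mem_Sigma_iff prod.collapse singletonI UNIV_I,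
        metis Ox_def mem_Sigma_iff prod.collapse singletonI UNIV_I)
  have nrl': "\<forall>L\<in>rational_lines \<sigma>. - p \<notin> L" by (rule RL_neg[OF nrl])
  have "near0 p"
  proof (cases "0 < fst p")
    case True
    show ?thesis
    proof (cases "0 < snd p")
      case True
      then show ?thesis using \<open>0 < fst p\<close> near0_Q hypQ_of[OF nrl] by blast
    next
      case False
      then have "0 < snd (- p)" "fst (- p) < 0" using nz \<open>0 < fst p\<close> by auto
      then have "near0 (- p)" using near0_II[OF nrl'] by blast
      then show ?thesis by (rule near0_neg)
    qed
  next
    case False
    then have fn: "fst p < 0" using nz by auto
    show ?thesis
    proof (cases "0 < snd p")
      case True
      then show ?thesis using near0_II[OF nrl fn] by blast
    next
      case False
      then have "0 < snd (- p)" "0 < fst (- p)" using nz fn by auto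
      then have "near0 (- p)" using near0_Q hypQ_of[OF nrl'] by blast
      then show ?thesis by (rule near0_neg)
    qed
  qed
  then show ?thesis by (rule all_C)
qed

end

theorem theorem1:
  fixes \<sigma> :: "real \<Rightarrow> real" and p :: "real \<times> real"
  assumes "incr_odd_homeo \<sigma>"
    and "\<forall>L \<in> rational_lines \<sigma>. p \<notin> L"
  shows "closure (orbit \<sigma> p) = UNIV"
proof -
  obtain \<tau> where "homeomorphism UNIV UNIV \<sigma> \<tau>" "strict_mono \<sigma>" "\<And>x. \<sigma> (- x) = - \<sigma> x"
    using assms(1) unfolding incr_odd_homeo_def by blast
  then interpret sig \<sigma> \<tau> by unfold_locales
  show ?thesis by (rule main[OF assms(2)])
qed

end
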